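(* Let $\mathcal H$ be a complex Hilbert space and $T\in\mathcal B(\mathcal H)$ left-invertible with $0\in\sigma(T)$, and let $T'=T(T^*T)^{-1}$. Then: (i) if $\sigma_r(T')\subseteq\overline{\mathbb D}$, then $\mathbb D\subseteq\sigma_r(T)\setminus\sigma_l(T)$; (ii) if $\|T\|\le1$ and $\sigma_r(T')\subseteq\overline{\mathbb D}$, then $\sigma_r(T)=\sigma(T)=\overline{\mathbb D}$.
   Context: $\mathbb D$ is the open unit disc; $\sigma_l$, $\sigma_r$ denote the left and right spectrum (set of $\lambda$ with $A-\lambda I$ not left-, resp. not right-, invertible). *)

theory Defs
  imports "HOL-Analysis.Analysis"
begin

text \<open>A complex Hilbert space is modelled as a type 'a with addition, together with
  a complex scalar multiplication scal and an inner product ip (linear in the first,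
  conjugate-linear in the second argument), complete w.r.t. the induced norm.\<close>

definition hnorm :: "('a \<Rightarrow> 'a \<Rightarrow> complex) \<Rightarrow> 'a \<Rightarrow> real" where
  "hnorm ip x = sqrt (Re (ip x x))"

definition complex_hilbert_space ::
  "(complex \<Rightarrow> 'a::ab_group_add \<Rightarrow> 'a) \<Rightarrow> ('a \<Rightarrow> 'a \<Rightarrow> complex) \<Rightarrow> bool" where
  "complex_hilbert_space scal ip \<longleftrightarrow>
     (\<forall>a x y. scal a (x + y) = scal a x + scal a y) \<and>
     (\<forall>a b x. scal (a + b) x = scal a x + scal b x) \<and>
     (\<forall>a b x. scal a (scal b x) = scal (a * b) x) \<and>
     (\<forall>x. scal 1 x = x) \<and>
     (\<forall>x y z. ip (x + y) z = ip x z + ip y z) \<and>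
     (\<forall>a x y. ip (scal a x) y = a * ip x y) \<and>
     (\<forall>x y. ip x y = cnj (ip y x)) \<and>
     (\<forall>x. Im (ip x x) = 0 \<and> Re (ip x x) \<ge> 0) \<and>
     (\<forall>x. ip x x = 0 \<longrightarrow> x = 0) \<and>
     (\<forall>X :: nat \<Rightarrow> 'a.
        (\<forall>e>0. \<exists>N. \<forall>m\<ge>N. \<forall>n\<ge>N. hnorm ip (X m - X n) < e) \<longrightarrow>
        (\<exists>L. (\<lambda>n. hnorm ip (X n - L)) \<longlonglongrightarrow> 0))"

definition bop ::
  "(complex \<Rightarrow> 'a::ab_group_add \<Rightarrow> 'a) \<Rightarrow> ('a \<Rightarrow> 'a \<Rightarrow> complex) \<Rightarrow> ('a \<Rightarrow> 'a) \<Rightarrow> bool" where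
  "bop scal ip T \<longleftrightarrow>
     (\<forall>x y. T (x + y) = T x + T y) \<and> (\<forall>a x. T (scal a x) = scal a (T x)) \<and>
     (\<exists>K. \<forall>x. hnorm ip (T x) \<le> K * hnorm ip x)"

definition adj ::
  "(complex \<Rightarrow> 'a::ab_group_add \<Rightarrow> 'a) \<Rightarrow> ('a \<Rightarrow> 'a \<Rightarrow> complex) \<Rightarrow> ('a \<Rightarrow> 'a) \<Rightarrow> ('a \<Rightarrow> 'a)" where
  "adj scal ip T = (SOME S. bop scal ip S \<and> (\<forall>x y. ip (T x) y = ip x (S y)))"

definition left_invertible ::
  "(complex \<Rightarrow> 'a::ab_group_add \<Rightarrow> 'a) \<Rightarrow> ('a \<Rightarrow> 'a \<Rightarrow> complex) \<Rightarrow> ('a \<Rightarrow> 'a) \<Rightarrow> bool" where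
  "left_invertible scal ip T \<longleftrightarrow> (\<exists>S. bop scal ip S \<and> S \<circ> T = id)"

definition right_invertible ::
  "(complex \<Rightarrow> 'a::ab_group_add \<Rightarrow> 'a) \<Rightarrow> ('a \<Rightarrow> 'a \<Rightarrow> complex) \<Rightarrow> ('a \<Rightarrow> 'a) \<Rightarrow> bool" where
  "right_invertible scal ip T \<longleftrightarrow> (\<exists>S. bop scal ip S \<and> T \<circ> S = id)"

definition op_invertible ::
  "(complex \<Rightarrow> 'a::ab_group_add \<Rightarrow> 'a) \<Rightarrow> ('a \<Rightarrow> 'a \<Rightarrow> complex) \<Rightarrow> ('a \<Rightarrow> 'a) \<Rightarrow> bool" where
  "op_invertible scal ip T \<longleftrightarrow> (\<exists>S. bop scal ip S \<and> S \<circ> T = id \<and> T \<circ> S = id)"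

definition op_inv ::
  "(complex \<Rightarrow> 'a::ab_group_add \<Rightarrow> 'a) \<Rightarrow> ('a \<Rightarrow> 'a \<Rightarrow> complex) \<Rightarrow> ('a \<Rightarrow> 'a) \<Rightarrow> ('a \<Rightarrow> 'a)" where
  "op_inv scal ip T = (SOME S. bop scal ip S \<and> S \<circ> T = id \<and> T \<circ> S = id)"

definition shift_op :: "(complex \<Rightarrow> 'a::ab_group_add \<Rightarrow> 'a) \<Rightarrow> ('a \<Rightarrow> 'a) \<Rightarrow> complex \<Rightarrow> ('a \<Rightarrow> 'a)" where
  "shift_op scal T l = (\<lambda>x. T x - scal l x)"

definition op_spectrum where
  "op_spectrum scal ip T = {l. \<not> op_invertible scal ip (shift_op scal T l)}"

definition left_spectrum where
  "left_spectrum scal ip T = {l. \<not> left_invertible scal ip (shift_op scal T l)}"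

definition right_spectrum where
  "right_spectrum scal ip T = {l. \<not> right_invertible scal ip (shift_op scal T l)}"

definition cauchy_dual where
  "cauchy_dual scal ip T = T \<circ> op_inv scal ip (adj scal ip T \<circ> T)"

end

theory Submission
  imports Defs
begin

locale hs =
  fixes scal :: "complex \<Rightarrow> 'a::ab_group_add \<Rightarrow> 'a" and ip :: "'a \<Rightarrow> 'a \<Rightarrow> complex"
  assumes H: "complex_hilbert_space scal ip"
begin

abbreviation nm where "nm x \<equiv> hnorm ip x"

lemma ax: "(\<forall>a x y. scal a (x + y) = scal a x + scal a y) \<and>
     (\<forall>a b x. scal (a + b) x = scal a x + scal b x) \<and>
     (\<forall>a b x. scal a (scal b x) = scal (a * b) x) \<and>
     (\<forall>x. scal 1 x = x) \<and>
     (\<forall>x y z. ip (x + y) z = ip x z + ip y z) \<and>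
     (\<forall>a x y. ip (scal a x) y = a * ip x y) \<and>
     (\<forall>x y. ip x y = cnj (ip y x)) \<and>
     (\<forall>x. Im (ip x x) = 0 \<and> Re (ip x x) \<ge> 0) \<and>
     (\<forall>x. ip x x = 0 \<longrightarrow> x = 0)"
  using H unfolding complex_hilbert_space_def by (elim conjE, intro conjI) assumption+

lemma scal_add_right: "scal a (x + y) = scal a x + scal a y"
proof -
  from ax have "\<forall>a x y. scal a (x + y) = scal a x + scal a y" by (elim conjE) assumption
  then show ?thesis by blast
qed
lemma scal_add_left: "scal (a + b) x = scal a x + scal b x"
proof -
  from ax have "\<forall>a b x. scal (a + b) x = scal a x + scal b x" by (elim conjE) assumption
  then show ?thesis by blast
qed
lemma scal_scal: "scal a (scal b x) = scal (a * b) x"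
proof -
  from ax have "\<forall>a b x. scal a (scal b x) = scal (a * b) x" by (elim conjE) assumption
  then show ?thesis by blast
qed
lemma scal_one[simp]: "scal 1 x = x"
proof -
  from ax have "\<forall>x. scal 1 x = x" by (elim conjE) assumption
  then show ?thesis by blast
qed
lemma ip_add_left: "ip (x + y) z = ip x z + ip y z"
proof -
  from ax have "\<forall>x y z. ip (x + y) z = ip x z + ip y z" by (elim conjE) assumption
  then show ?thesis by blast
qed
lemma ip_scal_left: "ip (scal a x) y = a * ip x y"
proof -
  from ax have "\<forall>a x y. ip (scal a x) y = a * ip x y" by (elim conjE) assumption
  then show ?thesis by blast
qed
lemma ip_sym: "ip x y = cnj (ip y x)"
proof -
  from ax have "\<forall>x y. ip x y = cnj (ip y x)" by (elim conjE) assumption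
  then show ?thesis by blast
qed
lemma ip_self_ImRe: "Im (ip x x) = 0 \<and> Re (ip x x) \<ge> 0"
proof -
  from ax have "\<forall>x. Im (ip x x) = 0 \<and> Re (ip x x) \<ge> 0" by (elim conjE) assumption
  then show ?thesis by blast
qed
lemma ip_self_zero0: "ip x x = 0 \<longrightarrow> x = 0"
proof -
  from ax have "\<forall>x. ip x x = 0 \<longrightarrow> x = 0" by (elim conjE) assumption
  then show ?thesis by blast
qed
lemma ip_self_Im: "Im (ip x x) = 0" using ip_self_ImRe by simp
lemma ip_self_Re: "Re (ip x x) \<ge> 0" using ip_self_ImRe by simp
lemma ip_self_zero: "ip x x = 0 \<Longrightarrow> x = 0" using ip_self_zero0 by simp

lemma complete:
  assumes "\<forall>e>0. \<exists>N. \<forall>m\<ge>N. \<forall>n\<ge>N. nm (X m - X n) < e"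
  shows "\<exists>L. (\<lambda>n. nm (X n - L)) \<longlonglongrightarrow> 0"
  using H assms unfolding complex_hilbert_space_def by blast

lemma scal_zero_left[simp]: "scal 0 x = 0"
  using scal_add_left[of 0 0 x] by simp

lemma scal_zero_right[simp]: "scal a 0 = 0"
  using scal_add_right[of a 0 0] by simp

lemma scal_minus_left: "scal (- a) x = - scal a x"
  using scal_add_left[of a "-a" x] by (simp add: eq_neg_iff_add_eq_0 add.commute)

lemma scal_minus_right: "scal a (- x) = - scal a x"
  using scal_add_right[of a x "-x"] by (simp add: eq_neg_iff_add_eq_0 add.commute)

lemma scal_diff_right: "scal a (x - y) = scal a x - scal a y"
  using scal_add_right[of a x "-y"] by (simp add: scal_minus_right)

lemma scal_diff_left: "scal (a - b) x = scal a x - scal b x"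
  using scal_add_left[of a "-b" x] by (simp add: scal_minus_left)

lemma ip_add_right: "ip x (y + z) = ip x y + ip x z"
proof -
  have "ip x (y + z) = cnj (ip (y + z) x)" by (rule ip_sym)
  also have "\<dots> = cnj (ip y x) + cnj (ip z x)" by (simp add: ip_add_left)
  finally show ?thesis using ip_sym[of x y] ip_sym[of x z] by simp
qed

lemma ip_scal_right: "ip x (scal a y) = cnj a * ip x y"
proof -
  have "ip x (scal a y) = cnj (ip (scal a y) x)" by (rule ip_sym)
  also have "\<dots> = cnj a * cnj (ip y x)" by (simp add: ip_scal_left)
  finally show ?thesis using ip_sym[of x y] by simp
qed

lemma ip_zero_left[simp]: "ip 0 y = 0"
  using ip_add_left[of 0 0 y] by simp

lemma ip_zero_right[simp]: "ip x 0 = 0"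
  using ip_add_right[of x 0 0] by simp

lemma ip_minus_left: "ip (- x) y = - ip x y"
  using ip_add_left[of x "-x" y] by (simp add: eq_neg_iff_add_eq_0 add.commute)

lemma ip_minus_right: "ip x (- y) = - ip x y"
  using ip_add_right[of x y "-y"] by (simp add: eq_neg_iff_add_eq_0 add.commute)

lemma ip_diff_left: "ip (x - y) z = ip x z - ip y z"
  using ip_add_left[of x "-y" z] by (simp add: ip_minus_left)

lemma ip_diff_right: "ip x (y - z) = ip x y - ip x z"
  using ip_add_right[of x y "-z"] by (simp add: ip_minus_right)

lemma nm_ge0: "nm x \<ge> 0"
  using ip_self_Re[of x] by (simp add: hnorm_def)

lemma nm_sq: "(nm x)^2 = Re (ip x x)"
  using ip_self_Re[of x] by (simp add: hnorm_def)

lemma ip_self: "ip x x = complex_of_real ((nm x)^2)"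
  by (simp add: nm_sq complex_eqI ip_self_Im)

lemma nm_zero[simp]: "nm 0 = 0"
  by (simp add: hnorm_def)

lemma nm_zero_iff: "nm x = 0 \<longleftrightarrow> x = 0"
proof
  assume "nm x = 0"
  then have "ip x x = 0" by (simp add: ip_self)
  then show "x = 0" by (rule ip_self_zero)
qed simp

lemma nm_pos: "x \<noteq> 0 \<Longrightarrow> nm x > 0"
  using nm_ge0[of x] nm_zero_iff[of x] by linarith

lemma nm_scal: "nm (scal a x) = cmod a * nm x"
proof -
  have "ip (scal a x) (scal a x) = (a * cnj a) * ip x x"
    by (simp add: ip_scal_left ip_scal_right)
  also have "a * cnj a = complex_of_real ((cmod a)^2)"
    using complex_norm_square[of a] by simp
  finally have "Re (ip (scal a x) (scal a x)) = (cmod a)^2 * Re (ip x x)"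
    by simp
  then have "(nm (scal a x))^2 = (cmod a * nm x)^2"
    by (simp add: nm_sq power_mult_distrib)
  then show ?thesis by (rule power2_eq_imp_eq) (simp_all add: nm_ge0)
qed

lemma nm_minus: "nm (- x) = nm x"
  using nm_scal[of "-1" x] by (simp add: scal_minus_left scal_one)

lemma nm_commute: "nm (x - y) = nm (y - x)"
  using nm_minus[of "x - y"] by simp

lemma nm_sq_add: "(nm (x + y))^2 = (nm x)^2 + (nm y)^2 + 2 * Re (ip x y)"
proof -
  have "ip (x+y) (x+y) = ip x x + ip y y + (ip x y + cnj (ip x y))"
    by (simp add: ip_add_left ip_add_right ip_sym[of y x])
  then have "Re (ip (x+y) (x+y)) = Re (ip x x) + Re (ip y y) + 2 * Re (ip x y)"
    by simp
  then show ?thesis by (simp add: nm_sq)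
qed

lemma nm_sq_diff: "(nm (x - y))^2 = (nm x)^2 + (nm y)^2 - 2 * Re (ip x y)"
  using nm_sq_add[of x "-y"] by (simp add: nm_minus ip_minus_right)

lemma cauchy_schwarz: "cmod (ip x y) \<le> nm x * nm y"
proof (cases "y = 0")
  case True then show ?thesis by simp
next
  case False
  define n where "n = (nm y)^2"
  have n: "n > 0" using nm_pos[OF False] by (simp add: n_def)
  define t where "t = ip x y / complex_of_real n"
  have "0 \<le> (nm (x - scal t y))^2" by simp
  also have "\<dots> = (nm x)^2 + (cmod t)^2 * n - 2 * Re (cnj t * ip x y)"
    by (simp add: nm_sq_diff nm_scal ip_scal_right power_mult_distrib n_def)
  also have "cnj t * ip x y = complex_of_real ((cmod (ip x y))^2 / n)"
    unfolding t_def using n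
    using complex_norm_square[of "ip x y"] by (simp add: mult.commute)
  also have "(cmod t)^2 * n = (cmod (ip x y))^2 / n"
    unfolding t_def using n by (simp add: norm_divide power2_eq_square)
  finally have "(cmod (ip x y))^2 \<le> (nm x)^2 * n"
    using n by (simp add: field_simps)
  also have "\<dots> = (nm x * nm y)^2" by (simp add: n_def power_mult_distrib)
  finally show ?thesis by (rule power2_le_imp_le) (simp add: nm_ge0)
qed

lemma Re_ip_le: "Re (ip x y) \<le> nm x * nm y"
  using cauchy_schwarz[of x y] complex_Re_le_cmod order_trans by blast

lemma nm_triangle: "nm (x + y) \<le> nm x + nm y"
proof -
  have "(nm (x + y))^2 \<le> (nm x + nm y)^2"
    using nm_sq_add[of x y] Re_ip_le[of x y] by (simp add: power2_sum)
  then show ?thesis using nm_ge0 by (meson add_nonneg_nonneg power2_le_imp_le)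
qed

lemma nm_triangle_diff: "nm (x - z) \<le> nm (x - y) + nm (y - z)"
  using nm_triangle[of "x - y" "y - z"] by simp

lemma nm_diff_ge: "\<bar>nm x - nm y\<bar> \<le> nm (x - y)"
  using nm_triangle[of "x - y" y] nm_triangle[of "y - x" x] nm_commute[of x y] by auto

lemma ip_unique_right: "(\<And>x. ip x u = ip x v) \<Longrightarrow> u = v"
proof -
  assume "\<And>x. ip x u = ip x v"
  then have "ip (u - v) (u - v) = 0" by (simp add: ip_diff_right)
  then show "u = v" using ip_self_zero[of "u - v"] by simp
qed

lemma ip_unique_left: "(\<And>x. ip u x = ip v x) \<Longrightarrow> u = v"
proof -
  assume "\<And>x. ip u x = ip v x"
  then have "ip (u - v) (u - v) = 0" by (simp add: ip_diff_left)
  then show "u = v" using ip_self_zero[of "u - v"] by simp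
qed

end

context hs begin

definition cv :: "(nat \<Rightarrow> 'a) \<Rightarrow> 'a \<Rightarrow> bool" where
  "cv X L \<longleftrightarrow> (\<lambda>n. nm (X n - L)) \<longlonglongrightarrow> 0"

lemma cv_unique: assumes "cv X L" "cv X M" shows "L = M"
proof -
  have le: "nm (L - M) \<le> nm (X n - L) + nm (X n - M)" for n
    using nm_triangle_diff[of L M "X n"] nm_commute[of L "X n"] by simp
  have "(\<lambda>n. nm (X n - L) + nm (X n - M)) \<longlonglongrightarrow> 0 + 0"
    using assms unfolding cv_def by (rule tendsto_add)
  then have "(\<lambda>n. nm (X n - L) + nm (X n - M)) \<longlonglongrightarrow> 0" by simp
  then have "nm (L - M) \<le> 0"
    using LIMSEQ_le_const[OF _ exI[of _ 0], of _ 0 "nm (L - M)"] le by auto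
  then show ?thesis using nm_ge0[of "L - M"] nm_zero_iff[of "L - M"] by simp
qed

lemma cv_Suc: "cv X L \<Longrightarrow> cv (\<lambda>n. X (Suc n)) L"
  unfolding cv_def by (rule LIMSEQ_Suc)

lemma cv_add_const: "cv X L \<Longrightarrow> cv (\<lambda>n. c + X n) (c + L)"
  unfolding cv_def by simp

lemma cv_nm: assumes "cv X L" shows "(\<lambda>n. nm (X n)) \<longlonglongrightarrow> nm L"
proof -
  have "(\<lambda>n. nm (X n) - nm L) \<longlonglongrightarrow> 0"
    apply (rule Lim_null_comparison[where g="\<lambda>n. nm (X n - L)"])
    using nm_diff_ge assms unfolding cv_def by auto
  then show ?thesis by (simp add: LIM_zero_iff)
qed

lemma cauchy_geom:
  assumes K: "0 \<le> K" "K < 1" and d: "\<And>n. nm (X (Suc n) - X n) \<le> C * K^n"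
  shows "\<exists>L. cv X L"
proof -
  have C: "C \<ge> 0" using d[of 0] nm_ge0[of "X 1 - X 0"] by simp
  have s: "nm (X (n + k) - X n) \<le> C * (\<Sum>i<k. K^(n+i))" for n k
  proof (induction k)
    case 0 then show ?case by simp
  next
    case (Suc k)
    have "nm (X (n + Suc k) - X n) \<le> nm (X (Suc (n + k)) - X (n + k)) + nm (X (n + k) - X n)"
      using nm_triangle_diff[of "X (n + Suc k)" "X n" "X (n + k)"] by simp
    also have "\<dots> \<le> C * K^(n+k) + C * (\<Sum>i<k. K^(n+i))"
      using d Suc by (intro add_mono) auto
    finally show ?case by (simp add: distrib_left)
  qed
  have g: "(\<Sum>i<k. K^(n+i)) \<le> K^n / (1 - K)" for n k
  proof -
    have "(\<Sum>i<k. K^(n+i)) = K^n * (\<Sum>i<k. K^i)" by (simp add: power_add sum_distrib_left)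
    also have "(\<Sum>i<k. K^i) = (1 - K^k) / (1 - K)" using K by (simp add: sum_gp_strict)
    also have "K^n * ((1 - K^k) / (1 - K)) \<le> K^n / (1 - K)"
      using K by (simp add: divide_right_mono mult_left_le)
    finally show ?thesis .
  qed
  have b: "nm (X m - X n) \<le> C * K^n / (1 - K)" if nmle: "n \<le> m" for m n
  proof -
    obtain k where "m = n + k" using le_Suc_ex[OF nmle] by blast
    have "nm (X m - X n) \<le> C * (\<Sum>i<k. K^(n+i))" using s[of n k] unfolding \<open>m = n + k\<close> .
    also have "\<dots> \<le> C * (K^n / (1 - K))" using g[of n k] C by (rule mult_left_mono)
    finally show ?thesis by simp
  qed
  have "(\<lambda>n. C / (1 - K) * K^n) \<longlonglongrightarrow> C / (1 - K) * 0"
    using K by (intro tendsto_mult tendsto_const LIMSEQ_power_zero) auto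
  then have lim: "(\<lambda>n. C * K^n / (1 - K)) \<longlonglongrightarrow> 0" by simp
  have "\<exists>L. (\<lambda>n. nm (X n - L)) \<longlonglongrightarrow> 0"
  proof (rule complete, intro allI impI)
    fix e :: real assume "e > 0"
    have "eventually (\<lambda>n. C * K^n / (1 - K) < e) sequentially"
      using lim \<open>e > 0\<close> by (rule order_tendstoD)
    then obtain N where N: "\<And>n. n \<ge> N \<Longrightarrow> C * K^n / (1 - K) < e"
      unfolding eventually_sequentially by blast
    have mono: "C * K^n / (1 - K) \<le> C * K^N / (1 - K)" if "n \<ge> N" for n
      using K C that by (intro divide_right_mono mult_left_mono power_decreasing) auto
    show "\<exists>N. \<forall>m\<ge>N. \<forall>n\<ge>N. nm (X m - X n) < e"
    proof (intro exI allI impI)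
      fix m n assume "m \<ge> N" "n \<ge> N"
      show "nm (X m - X n) < e"
      proof (cases "n \<le> m")
        case True then show ?thesis using b[of n m] mono[of n] N[of N] \<open>n \<ge> N\<close> by linarith
      next
        case False then show ?thesis using b[of m n] mono[of m] N[of N] \<open>m \<ge> N\<close> nm_commute[of "X m" "X n"] by linarith
      qed
    qed
  qed
  then show ?thesis unfolding cv_def .
qed

lemma bopI:
  assumes "\<And>x y. A (x + y) = A x + A y" "\<And>a x. A (scal a x) = scal a (A x)"
    "\<And>x. nm (A x) \<le> K * nm x"
  shows "bop scal ip A"
  unfolding bop_def using assms by blast

lemma bop_add: "bop scal ip A \<Longrightarrow> A (x + y) = A x + A y"
  unfolding bop_def by blast

lemma bop_scal: "bop scal ip A \<Longrightarrow> A (scal a x) = scal a (A x)"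
  unfolding bop_def by blast

lemma bop_zero: "bop scal ip A \<Longrightarrow> A 0 = 0"
  using bop_add[of A 0 0] by simp

lemma bop_minus: "bop scal ip A \<Longrightarrow> A (- x) = - A x"
  using bop_add[of A x "- x"] bop_zero[of A] by (simp add: eq_neg_iff_add_eq_0 add.commute)

lemma bop_diff: "bop scal ip A \<Longrightarrow> A (x - y) = A x - A y"
  using bop_add[of A x "- y"] bop_minus[of A y] by simp

lemma bop_bound:
  assumes "bop scal ip A"
  obtains K where "K > 0" "\<And>x. nm (A x) \<le> K * nm x"
proof -
  obtain K where K: "\<And>x. nm (A x) \<le> K * nm x" using assms unfolding bop_def by blast
  have "nm (A x) \<le> max K 1 * nm x" for x
    using K[of x] nm_ge0[of x] by (meson max.cobounded1 mult_right_mono order_trans)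
  then show ?thesis using that[of "max K 1"] by simp
qed

lemma bop_id: "bop scal ip (\<lambda>x. x)"
  by (rule bopI[where K=1]) auto

lemma bop_comp: assumes "bop scal ip A" "bop scal ip B" shows "bop scal ip (\<lambda>x. A (B x))"
proof -
  obtain KA where KA: "\<And>x. nm (A x) \<le> KA * nm x" "KA > 0" using bop_bound[OF assms(1)] by blast
  obtain KB where KB: "\<And>x. nm (B x) \<le> KB * nm x" "KB > 0" using bop_bound[OF assms(2)] by blast
  show ?thesis
  proof (rule bopI[where K="KA * KB"])
    fix x
    have "nm (A (B x)) \<le> KA * nm (B x)" by (rule KA)
    also have "\<dots> \<le> KA * (KB * nm x)" using KB KA by (intro mult_left_mono) auto
    finally show "nm (A (B x)) \<le> KA * KB * nm x" by simp
  qed (simp_all add: assms bop_add bop_scal)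
qed

lemma bop_comp': "bop scal ip A \<Longrightarrow> bop scal ip B \<Longrightarrow> bop scal ip (A \<circ> B)"
  using bop_comp[of A B] by (simp add: comp_def)

lemma bop_sub: assumes "bop scal ip A" "bop scal ip B" shows "bop scal ip (\<lambda>x. A x - B x)"
proof -
  obtain KA where KA: "\<And>x. nm (A x) \<le> KA * nm x" "KA > 0" using bop_bound[OF assms(1)] by blast
  obtain KB where KB: "\<And>x. nm (B x) \<le> KB * nm x" "KB > 0" using bop_bound[OF assms(2)] by blast
  show ?thesis
  proof (rule bopI[where K="KA + KB"])
    fix x
    have "nm (A x - B x) \<le> nm (A x) + nm (B x)"
      using nm_triangle[of "A x" "- B x"] nm_minus[of "B x"] by simp
    also have "\<dots> \<le> (KA + KB) * nm x" using KA KB by (simp add: distrib_right add_mono)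
    finally show "nm (A x - B x) \<le> (KA + KB) * nm x" .
  qed (simp_all add: assms bop_add bop_scal scal_add_right scal_diff_right)
qed

lemma bop_smult: assumes "bop scal ip A" shows "bop scal ip (\<lambda>x. scal c (A x))"
proof -
  obtain KA where KA: "\<And>x. nm (A x) \<le> KA * nm x" "KA > 0" using bop_bound[OF assms(1)] by blast
  show ?thesis
  proof (rule bopI[where K="cmod c * KA"])
    fix x
    show "nm (scal c (A x)) \<le> cmod c * KA * nm x"
      using KA by (simp add: nm_scal mult.assoc mult_left_mono)
  qed (simp_all add: assms bop_add bop_scal scal_add_right scal_scal mult.commute)
qed

lemma bop_scal_id: "bop scal ip (\<lambda>x. scal c x)"
  using bop_smult[OF bop_id] .

lemma cv_bop: assumes "bop scal ip A" "cv X L" shows "cv (\<lambda>n. A (X n)) (A L)"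
proof -
  obtain K where K: "\<And>x. nm (A x) \<le> K * nm x" "K > 0" using bop_bound[OF assms(1)] by blast
  have "(\<lambda>n. K * nm (X n - L)) \<longlonglongrightarrow> K * 0"
    using assms(2) unfolding cv_def by (intro tendsto_mult tendsto_const)
  then have lim: "(\<lambda>n. K * nm (X n - L)) \<longlonglongrightarrow> 0" by simp
  have "norm (nm (A (X n) - A L)) \<le> K * nm (X n - L)" for n
  proof -
    have "nm (A (X n) - A L) = nm (A (X n - L))" by (simp add: bop_diff[OF assms(1)])
    then show ?thesis using K(1)[of "X n - L"] nm_ge0[of "A (X n) - A L"] by simp
  qed
  then show ?thesis unfolding cv_def
    by (intro Lim_null_comparison[OF _ lim]) simp
qed

lemma inv_bb:
  assumes B: "bop scal ip B" and surj: "\<And>y. \<exists>x. B x = y" and bb: "\<And>x. nm x \<le> c * nm (B x)"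
  shows "\<exists>S. bop scal ip S \<and> (\<forall>y. B (S y) = y) \<and> (\<forall>x. S (B x) = x) \<and> (\<forall>y. nm (S y) \<le> c * nm y)"
proof -
  have inj: "B x = B x' \<Longrightarrow> x = x'" for x x'
    using bb[of "x - x'"] bop_diff[OF B, of x x'] nm_ge0[of "x - x'"] nm_zero_iff[of "x - x'"] by simp
  define S where "S y = (SOME x. B x = y)" for y
  have BS: "B (S y) = y" for y unfolding S_def by (rule someI_ex[OF surj])
  have SB: "S (B x) = x" for x using BS[of "B x"] inj by blast
  have "bop scal ip S"
  proof (rule bopI[where K=c])
    show "S (x + y) = S x + S y" for x y
      by (rule inj) (simp add: BS bop_add[OF B])
    show "S (scal a x) = scal a (S x)" for a x
      by (rule inj) (simp add: BS bop_scal[OF B])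
    show "nm (S x) \<le> c * nm x" for x using bb[of "S x"] BS by simp
  qed
  moreover have "nm (S y) \<le> c * nm y" for y using bb[of "S y"] BS by simp
  ultimately show ?thesis using BS SB by (intro exI[of _ S] conjI allI) auto
qed

lemma neumann:
  assumes A: "bop scal ip A" and K: "\<And>x. nm (A x) \<le> K * nm x" "0 \<le> K" "K < 1"
  shows "\<exists>W. bop scal ip W \<and> (\<forall>y. W y - A (W y) = y) \<and> (\<forall>x. W (x - A x) = x)
            \<and> (\<forall>y. nm (W y) \<le> (1 / (1 - K)) * nm y)"
proof -
  have B: "bop scal ip (\<lambda>x. x - A x)" using bop_sub[OF bop_id A] .
  have surj: "\<exists>x. x - A x = y" for y
  proof -
    define X where "X = rec_nat 0 (\<lambda>_ x. y + A x)"
    have X0: "X 0 = 0" and XS: "X (Suc n) = y + A (X n)" for n by (simp_all add: X_def)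
    have d: "nm (X (Suc n) - X n) \<le> nm y * K^n" for n
    proof (induction n)
      case 0 then show ?case by (simp add: X0 XS bop_zero[OF A])
    next
      case (Suc n)
      have "X (Suc (Suc n)) - X (Suc n) = A (X (Suc n) - X n)"
        by (simp add: XS bop_diff[OF A])
      then have "nm (X (Suc (Suc n)) - X (Suc n)) \<le> K * nm (X (Suc n) - X n)" using K(1) by simp
      also have "\<dots> \<le> K * (nm y * K^n)" using Suc K(2) by (rule mult_left_mono)
      finally show ?case by (simp add: mult_ac)
    qed
    obtain L where L: "cv X L" using cauchy_geom[OF K(2,3) d] by blast
    have "cv (\<lambda>n. X (Suc n)) L" using cv_Suc[OF L] .
    moreover have "cv (\<lambda>n. X (Suc n)) (y + A L)"
      unfolding XS by (rule cv_add_const, rule cv_bop[OF A L])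
    ultimately have "L = y + A L" by (rule cv_unique)
    then show ?thesis by (intro exI[of _ L]) (simp add: algebra_simps)
  qed
  have bb: "nm x \<le> (1 / (1 - K)) * nm (x - A x)" for x
  proof -
    have "nm x \<le> nm (x - A x) + nm (A x)" using nm_triangle[of "x - A x" "A x"] by simp
    also have "\<dots> \<le> nm (x - A x) + K * nm x" using K(1) by simp
    finally have "(1 - K) * nm x \<le> nm (x - A x)" by (simp add: algebra_simps)
    then show ?thesis using K by (simp add: field_simps)
  qed
  obtain W where "bop scal ip W" "\<forall>y. W y - A (W y) = y" "\<forall>x. W (x - A x) = x"
      "\<forall>y. nm (W y) \<le> (1 / (1 - K)) * nm y"
    using inv_bb[OF B surj bb] by auto
  then show ?thesis by (intro exI[of _ W]) auto
qed

end

context hs begin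

lemma parallelogram: "(nm (x - y))^2 + (nm (x + y))^2 = 2 * (nm x)^2 + 2 * (nm y)^2"
  using nm_sq_add[of x y] nm_sq_diff[of x y] by simp

lemma riesz:
  fixes f :: "'a \<Rightarrow> complex"
  assumes add: "\<And>x y. f (x + y) = f x + f y" and hom: "\<And>a x. f (scal a x) = a * f x"
    and bd: "\<And>x. cmod (f x) \<le> K * nm x"
  shows "\<exists>z. \<forall>x. f x = ip x z"
proof (cases "\<forall>x. f x = 0")
  case True then show ?thesis by (intro exI[of _ 0]) simp
next
  case False
  then obtain x1 where x1: "f x1 \<noteq> 0" by blast
  have f0: "f 0 = 0" using add[of 0 0] by simp
  have fminus: "f (- x) = - f x" for x using add[of x "- x"] f0 by (simp add: eq_neg_iff_add_eq_0 add.commute)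
  have fdiff: "f (x - y) = f x - f y" for x y using add[of x "- y"] fminus[of y] by simp
  define u where "u = scal (1 / f x1) x1"
  have fu: "f u = 1" using x1 by (simp add: u_def hom)
  define S where "S = (\<lambda>x. (nm x)^2) ` {x. f x = 1}"
  define D where "D = Inf S"
  have Sne: "S \<noteq> {}" using fu unfolding S_def by blast
  have Sbdd: "bdd_below S" unfolding S_def by (intro bdd_belowI[of _ 0]) auto
  have Dle: "D \<le> (nm x)^2" if "f x = 1" for x
    unfolding D_def using Sbdd that by (intro cInf_lower) (auto simp: S_def)
  have "\<exists>x. f x = 1 \<and> (nm x)^2 < D + inverse (real (Suc n))" for n
  proof -
    have "Inf S < D + inverse (real (Suc n))" unfolding D_def by simp
    then obtain s where "s \<in> S" "s < D + inverse (real (Suc n))"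
      using cInf_lessD[OF Sne] by blast
    then show ?thesis unfolding S_def by blast
  qed
  then obtain X where X1: "\<And>n. f (X n) = 1" and X2: "\<And>n. (nm (X n))^2 < D + inverse (real (Suc n))"
    using choice[of "\<lambda>n x. f x = 1 \<and> (nm x)^2 < D + inverse (real (Suc n))"] by auto
  have half: "(nm (x - y))^2 \<le> 2 * (nm x)^2 + 2 * (nm y)^2 - 4 * D" if "f x = 1" "f y = 1" for x y
  proof -
    have "f (scal (1/2) (x + y)) = 1" using that by (simp add: hom add)
    then have "D \<le> (nm (scal (1/2) (x + y)))^2" by (rule Dle)
    also have "\<dots> = (nm (x + y))^2 / 4" by (simp add: nm_scal power_mult_distrib power_divide)
    finally show ?thesis using parallelogram[of x y] by simp
  qed
  have cauchy: "\<exists>N. \<forall>m\<ge>N. \<forall>n\<ge>N. nm (X m - X n) < e" if "e > 0" for e :: real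
  proof -
    obtain N where N: "4 / e^2 < real N" using reals_Archimedean2 by blast
    have e2: "e^2 > 0" using that by simp
    have "\<forall>m\<ge>N. \<forall>n\<ge>N. nm (X m - X n) < e"
    proof (intro allI impI)
      fix m n assume mN: "m \<ge> N" and nN: "n \<ge> N"
      have im: "inverse (real (Suc m)) \<le> inverse (real (Suc N))" using mN by (simp add: le_imp_inverse_le)
      have inn: "inverse (real (Suc n)) \<le> inverse (real (Suc N))" using nN by (simp add: le_imp_inverse_le)
      have "(nm (X m - X n))^2 \<le> 2 * (nm (X m))^2 + 2 * (nm (X n))^2 - 4 * D"
        using half X1 by blast
      also have "\<dots> \<le> 2 * inverse (real (Suc m)) + 2 * inverse (real (Suc n))"
        using X2[of m] X2[of n] by simp
      also have "\<dots> \<le> 4 * inverse (real (Suc N))" using im inn by linarith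
      also have "\<dots> < e^2"
      proof -
        have "4 / e^2 < real (Suc N)" using N by simp
        then have "4 < e^2 * real (Suc N)" using e2 by (simp add: field_simps)
        then show ?thesis by (simp add: field_simps)
      qed
      finally have "(nm (X m - X n))^2 < e^2" .
      then show "nm (X m - X n) < e" using that nm_ge0 by (simp add: power_less_imp_less_base)
    qed
    then show ?thesis by blast
  qed
  obtain L where L: "cv X L" using complete[of X] cauchy unfolding cv_def by blast
  have fL: "f L = 1"
  proof -
    have le: "cmod (1 - f L) \<le> K * nm (X n - L)" for n
      using bd[of "X n - L"] X1[of n] by (simp add: fdiff)
    have "(\<lambda>n. K * nm (X n - L)) \<longlonglongrightarrow> 0"
      using L unfolding cv_def by (rule tendsto_mult_right_zero)
    then have "cmod (1 - f L) \<le> 0"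
      using LIMSEQ_le_const[OF _ exI[of _ 0], of _ 0 "cmod (1 - f L)"] le by auto
    then show ?thesis by simp
  qed
  have LD: "(nm L)^2 \<le> D"
  proof -
    have a: "(\<lambda>n. (nm (X n))^2) \<longlonglongrightarrow> (nm L)^2" using cv_nm[OF L] by (rule tendsto_power)
    have b: "(\<lambda>n. D + inverse (real (Suc n))) \<longlonglongrightarrow> D + 0"
      by (intro tendsto_add tendsto_const LIMSEQ_inverse_real_of_nat)
    show ?thesis using LIMSEQ_le[OF a b] X2 less_imp_le by auto
  qed
  have orth: "ip L k = 0" if fk: "f k = 0" for k
  proof -
    define w where "w = ip L k"
    define s where "s = 1 / ((nm k)^2 + 1)"
    have nk: "0 \<le> (nm k)^2" by simp
    have d: "0 < (nm k)^2 + 1" using nk by linarith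
    have s1: "s > 0" unfolding s_def using d by simp
    have "s * (nm k)^2 = (nm k)^2 / ((nm k)^2 + 1)" by (simp add: s_def)
    also have "\<dots> < 1" using d by (simp add: divide_less_eq)
    finally have s: "s > 0" "s * (nm k)^2 < 1" using s1 by auto
    define t where "t = - (complex_of_real s * w)"
    have "f (L + scal t k) = 1" using fL fk by (simp add: add hom)
    then have "D \<le> (nm (L + scal t k))^2" by (rule Dle)
    then have "(nm L)^2 \<le> (nm L)^2 + (nm (scal t k))^2 + 2 * Re (ip L (scal t k))"
      using LD nm_sq_add[of L "scal t k"] by simp
    then have h: "0 \<le> (cmod t)^2 * (nm k)^2 + 2 * Re (cnj t * w)"
      by (simp add: nm_scal power_mult_distrib ip_scal_right w_def)
    have "cnj t * w = - complex_of_real (s * (cmod w)^2)"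
      using complex_norm_square[of w] by (simp add: t_def)
    then have r: "Re (cnj t * w) = - (s * (cmod w)^2)" by simp
    have ct: "cmod t = s * cmod w" using s by (simp add: t_def norm_mult)
    have "(cmod t)^2 * (nm k)^2 + 2 * Re (cnj t * w) = s * (cmod w)^2 * (s * (nm k)^2 - 2)"
      unfolding r ct by (simp add: algebra_simps power2_eq_square)
    then have "0 \<le> s * (cmod w)^2 * (s * (nm k)^2 - 2)" using h by simp
    moreover have "s * (nm k)^2 - 2 < 0" using s by simp
    ultimately have "s * (cmod w)^2 \<le> 0"
      using zero_le_mult_iff[of "s * (cmod w)^2" "s * (nm k)^2 - 2"] by linarith
    then have "(cmod w)^2 \<le> 0" using s(1) mult_le_0_iff[of s "(cmod w)^2"] by linarith
    then have "cmod w = 0" by simp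
    then show ?thesis unfolding w_def by simp
  qed
  have L0: "L \<noteq> 0" using fL f0 by auto
  define c where "c = 1 / (nm L)^2"
  have "f x = ip x (scal (complex_of_real c) L)" for x
  proof -
    have "f (x - scal (f x) L) = 0" using fL by (simp add: fdiff hom)
    then have "ip L (x - scal (f x) L) = 0" by (rule orth)
    then have "ip (x - scal (f x) L) L = 0" using ip_sym[of "x - scal (f x) L" L] by simp
    then have "ip x L = f x * ip L L" by (simp add: ip_diff_left ip_scal_left)
    then have "ip x L = f x * complex_of_real ((nm L)^2)" by (simp add: ip_self)
    moreover have "(nm L)^2 \<noteq> 0" using nm_pos[OF L0] by simp
    ultimately show ?thesis by (simp add: ip_scal_right c_def)
  qed
  then show ?thesis by blast
qed

lemma adj_ex:
  assumes A: "bop scal ip A"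
  shows "\<exists>B. bop scal ip B \<and> (\<forall>x y. ip (A x) y = ip x (B y))"
proof -
  obtain KA where KA: "\<And>x. nm (A x) \<le> KA * nm x" "KA > 0" using bop_bound[OF A] by blast
  have ex: "\<exists>z. \<forall>x. ip (A x) y = ip x z" for y
  proof (rule riesz[where K="KA * nm y"])
    show "ip (A (x + x')) y = ip (A x) y + ip (A x') y" for x x'
      by (simp add: bop_add[OF A] ip_add_left)
    show "ip (A (scal a x)) y = a * ip (A x) y" for a x
      by (simp add: bop_scal[OF A] ip_scal_left)
    show "cmod (ip (A x) y) \<le> KA * nm y * nm x" for x
    proof -
      have "cmod (ip (A x) y) \<le> nm (A x) * nm y" by (rule cauchy_schwarz)
      also have "\<dots> \<le> KA * nm x * nm y" using KA(1)[of x] nm_ge0[of y] by (rule mult_right_mono)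
      finally show ?thesis by (simp add: mult_ac)
    qed
  qed
  define B where "B y = (SOME z. \<forall>x. ip (A x) y = ip x z)" for y
  have B: "ip (A x) y = ip x (B y)" for x y
    using someI_ex[OF ex[of y]] unfolding B_def by blast
  have "bop scal ip B"
  proof (rule bopI[where K=KA])
    show "B (y + y') = B y + B y'" for y y'
      by (rule ip_unique_right) (simp add: B[symmetric] ip_add_right)
    show "B (scal a y) = scal a (B y)" for a y
      by (rule ip_unique_right) (simp add: B[symmetric] ip_scal_right)
    show "nm (B y) \<le> KA * nm y" for y
    proof (cases "B y = 0")
      case True then show ?thesis using KA nm_ge0[of y] by simp
    next
      case False
      have "(nm (B y))^2 = Re (ip (A (B y)) y)"
        by (simp add: nm_sq B[symmetric])
      also have "\<dots> \<le> nm (A (B y)) * nm y" by (rule Re_ip_le)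
      also have "\<dots> \<le> KA * nm (B y) * nm y" using KA(1) nm_ge0[of y] by (rule mult_right_mono)
      finally have "nm (B y) * nm (B y) \<le> nm (B y) * (KA * nm y)"
        by (simp add: power2_eq_square mult_ac)
      then show ?thesis using nm_pos[OF False] by simp
    qed
  qed
  then show ?thesis using B by blast
qed

lemma adj_prop:
  assumes A: "bop scal ip A"
  shows "bop scal ip (adj scal ip A)" "\<And>x y. ip (A x) y = ip x (adj scal ip A y)"
proof -
  have "bop scal ip (adj scal ip A) \<and> (\<forall>x y. ip (A x) y = ip x (adj scal ip A y))"
    unfolding adj_def by (rule someI_ex[OF adj_ex[OF A]])
  then show "bop scal ip (adj scal ip A)" "\<And>x y. ip (A x) y = ip x (adj scal ip A y)" by auto
qed

end

context hs begin

definition sa :: "('a \<Rightarrow> 'a) \<Rightarrow> bool" where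
  "sa P \<longleftrightarrow> (\<forall>x y. ip (P x) y = ip x (P y))"

lemma scal_inv_cancel: "c \<noteq> 0 \<Longrightarrow> scal (1 / c) (scal c x) = x"
  by (simp add: scal_scal)

lemma scal_inv_cancel': "c \<noteq> 0 \<Longrightarrow> scal c (scal (1 / c) x) = x"
  by (simp add: scal_scal)

lemma gram_inv:
  assumes A: "bop scal ip A" and S: "bop scal ip S" and SA: "\<And>x. S (A x) = x"
  shows "\<exists>M. bop scal ip M \<and> (\<forall>x. M (adj scal ip A (A x)) = x) \<and> (\<forall>y. adj scal ip A (A (M y)) = y)"
proof -
  define Aa where "Aa = adj scal ip A"
  have Aa: "bop scal ip Aa" "\<And>x y. ip (A x) y = ip x (Aa y)" using adj_prop[OF A] by (simp_all add: Aa_def)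
  define P where "P x = Aa (A x)" for x
  have P: "bop scal ip P" unfolding P_def by (rule bop_comp[OF Aa(1) A])
  have Pip: "ip (P x) y = ip (A x) (A y)" for x y
  proof -
    have "ip y (P x) = ip (A y) (A x)" unfolding P_def by (simp add: Aa(2))
    then show ?thesis using ip_sym[of "P x" y] ip_sym[of "A x" "A y"] by simp
  qed
  obtain KS where KS: "\<And>x. nm (S x) \<le> KS * nm x" "KS > 0" using bop_bound[OF S] by blast
  obtain KP where KP: "\<And>x. nm (P x) \<le> KP * nm x" "KP > 0" using bop_bound[OF P] by blast
  define m where "m = 1 / KS^2"
  have m: "m > 0" using KS by (simp add: m_def)
  have lowA: "m * (nm x)^2 \<le> (nm (A x))^2" for x
  proof -
    have "nm x \<le> KS * nm (A x)" using KS(1)[of "A x"] SA by simp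
    then have "(nm x)^2 \<le> (KS * nm (A x))^2" using nm_ge0 by (simp add: power_mono)
    then show ?thesis using KS by (simp add: m_def power_mult_distrib field_simps)
  qed
  have RePx: "Re (ip (P x) x) = (nm (A x))^2" for x by (simp add: Pip nm_sq)
  have RePx': "Re (ip x (P x)) = (nm (A x))^2" for x
    using RePx[of x] ip_sym[of x "P x"] by simp
  have bb: "nm x \<le> (1 / m) * nm (P x)" for x
  proof (cases "x = 0")
    case True then show ?thesis using m nm_ge0[of "P 0"] by simp
  next
    case False
    have "m * (nm x)^2 \<le> nm (P x) * nm x" using lowA[of x] RePx[of x] Re_ip_le[of "P x" x] by simp
    then have "m * nm x * nm x \<le> nm (P x) * nm x" by (simp add: power2_eq_square mult_ac)
    then have "m * nm x \<le> nm (P x)" using nm_pos[OF False] by simp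
    then show ?thesis using m by (simp add: field_simps)
  qed
  define t where "t = m / (KP^2 + 1)"
  have kp1: "KP^2 + 1 > 0" using zero_le_power2[of KP] by linarith
  have t: "t > 0" using m kp1 by (simp add: t_def)
  define q where "q = 1 + t^2 * KP^2 - 2 * t * m"
  have q1: "q < 1"
  proof -
    have "t * KP^2 < m" using m kp1 unfolding t_def by (simp add: field_simps)
    then have "t * (t * KP^2) < t * m" using t by simp
    then show ?thesis unfolding q_def using t m by (simp add: power2_eq_square algebra_simps)
  qed
  define E where "E x = x - scal (complex_of_real t) (P x)" for x
  have E: "bop scal ip E" unfolding E_def by (intro bop_sub bop_id bop_smult P)
  have Esq: "(nm (E x))^2 \<le> q * (nm x)^2" for x
  proof -
    have e1: "(nm (E x))^2 = (nm x)^2 + t^2 * (nm (P x))^2 - 2 * Re (ip x (scal (complex_of_real t) (P x)))"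
      unfolding E_def nm_sq_diff by (simp add: nm_scal power_mult_distrib)
    have e2: "Re (ip x (scal (complex_of_real t) (P x))) = t * (nm (A x))^2"
      by (simp add: ip_scal_right RePx')
    have e3: "(nm (P x))^2 \<le> (KP * nm x)^2" using KP(1)[of x] nm_ge0 by (simp add: power_mono)
    have e4: "t^2 * (nm (P x))^2 \<le> t^2 * (KP * nm x)^2" using e3 by (simp add: mult_left_mono)
    have e5: "t * m * (nm x)^2 \<le> t * (nm (A x))^2" using lowA[of x] t by simp
    have "(nm x)^2 + t^2 * (nm (P x))^2 - 2 * (t * (nm (A x))^2) \<le> q * (nm x)^2"
      using e4 e5 unfolding q_def by (simp add: power_mult_distrib algebra_simps)
    then show ?thesis using e1 e2 by simp
  qed
  define q' where "q' = sqrt (max q 0)"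
  have q': "0 \<le> q'" "q' < 1" using q1 by (simp_all add: q'_def real_sqrt_lt_1_iff)
  have Eb: "nm (E x) \<le> q' * nm x" for x
  proof -
    have "(nm (E x))^2 \<le> max q 0 * (nm x)^2" using Esq[of x]
      by (meson max.cobounded1 mult_right_mono order_trans zero_le_power2)
    then have "sqrt ((nm (E x))^2) \<le> sqrt (max q 0 * (nm x)^2)" by (rule real_sqrt_le_mono)
    then show ?thesis by (simp add: q'_def real_sqrt_mult nm_ge0)
  qed
  obtain W where W: "\<forall>y. W y - E (W y) = y" using neumann[OF E Eb q'] by blast
  have surj: "\<exists>x. P x = y" for y
  proof -
    have "scal (complex_of_real t) (P (W y)) = y" using W unfolding E_def by simp
    then have "P (scal (complex_of_real t) (W y)) = y"
      by (simp add: bop_scal[OF P])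
    then show ?thesis by blast
  qed
  obtain M where "bop scal ip M" "\<forall>y. P (M y) = y" "\<forall>x. M (P x) = x"
    using inv_bb[OF P surj bb] by blast
  then show ?thesis unfolding P_def Aa_def by blast
qed

lemma inv_sa:
  assumes "sa P" "\<And>y. P (M y) = y"
  shows "sa M"
  unfolding sa_def
proof (intro allI)
  fix y z
  have "ip (M y) z = ip (M y) (P (M z))" using assms(2) by simp
  also have "\<dots> = ip (P (M y)) (M z)" using assms(1) unfolding sa_def by simp
  finally show "ip (M y) z = ip y (M z)" using assms(2) by simp
qed

lemma orth_vec:
  assumes A: "bop scal ip A" and S: "bop scal ip S" and SA: "\<And>x. S (A x) = x"
    and ns: "\<And>x. A x \<noteq> z"
  shows "\<exists>y. y \<noteq> 0 \<and> (\<forall>x. ip (A x) y = 0)"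
proof -
  define Aa where "Aa = adj scal ip A"
  have Aa: "bop scal ip Aa" "\<And>x y. ip (A x) y = ip x (Aa y)" using adj_prop[OF A] by (simp_all add: Aa_def)
  obtain M where M: "bop scal ip M" "\<And>y. Aa (A (M y)) = y"
    using gram_inv[OF A S SA] unfolding Aa_def[symmetric] by blast
  define y where "y = z - A (M (Aa z))"
  have "Aa y = 0" unfolding y_def by (simp add: bop_diff[OF Aa(1)] M(2))
  then have "ip (A x) y = 0" for x by (simp add: Aa(2))
  moreover have "y \<noteq> 0" unfolding y_def using ns[of "M (Aa z)"] by simp
  ultimately show ?thesis by blast
qed

lemma not_surj_stable:
  assumes A: "bop scal ip A" and S: "bop scal ip S" and SA: "\<And>x. S (A x) = x"
    and KS: "\<And>x. nm (S x) \<le> KS * nm x" "KS > 0"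
    and ns: "\<And>x. A x \<noteq> z"
    and BA: "\<And>x. nm (B x - A x) \<le> e * nm x" and e: "0 \<le> e" "e * KS \<le> 1/4"
  shows "\<not> (\<exists>R. \<forall>y. B (R y) = y)"
proof
  assume "\<exists>R. \<forall>y. B (R y) = y"
  then obtain R where R: "\<And>y. B (R y) = y" by blast
  obtain y where y: "y \<noteq> 0" "\<And>x. ip (A x) y = 0" using orth_vec[OF A S SA ns] by blast
  define x where "x = R y"
  have Bx: "B x = y" unfolding x_def by (rule R)
  have "nm x \<le> KS * nm (A x)" using KS(1)[of "A x"] SA by simp
  also have "nm (A x) \<le> nm (B x) + nm (B x - A x)"
    using nm_triangle[of "B x" "A x - B x"] nm_commute[of "B x" "A x"] by simp
  finally have "nm x \<le> KS * (nm y + e * nm x)" using BA[of x] KS(2) Bx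
    by (smt (verit) mult_left_mono)
  then have x1: "(1 - e * KS) * nm x \<le> KS * nm y" by (simp add: algebra_simps)
  have "(nm (y - A x))^2 = (nm y)^2 + (nm (A x))^2"
    using nm_sq_diff[of y "A x"] y(2)[of x] ip_sym[of y "A x"] by simp
  then have "nm y \<le> nm (y - A x)" using nm_ge0
    by (metis le_add_same_cancel1 power2_le_imp_le zero_le_power2)
  also have "\<dots> \<le> e * nm x" using BA[of x] Bx by simp
  finally have y1: "nm y \<le> e * nm x" .
  have "(1 - e * KS) * nm y \<le> (1 - e * KS) * (e * nm x)"
    using y1 e by (intro mult_left_mono) auto
  also have "\<dots> = e * ((1 - e * KS) * nm x)" by simp
  also have "\<dots> \<le> e * (KS * nm y)" using x1 e by (intro mult_left_mono) auto
  finally have "(1 - 2 * (e * KS)) * nm y \<le> 0" by (simp add: algebra_simps)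
  moreover have "1 - 2 * (e * KS) > 0" using e by simp
  ultimately have "nm y \<le> 0" by (simp add: mult_le_0_iff)
  then show False using nm_pos[OF y(1)] by simp
qed

lemma right_inv_stable:
  assumes A: "bop scal ip A" and R: "bop scal ip R" and AR: "\<And>y. A (R y) = y"
    and KR: "\<And>y. nm (R y) \<le> KR * nm y" "KR > 0"
    and B: "bop scal ip B" and BA: "\<And>x. nm (B x - A x) \<le> e * nm x" and e: "0 \<le> e" "e * KR < 1"
  shows "right_invertible scal ip B"
proof -
  define E where "E y = A (R y) - B (R y)" for y
  have E: "bop scal ip E" unfolding E_def by (rule bop_sub[OF bop_comp[OF A R] bop_comp[OF B R]])
  have Eb: "nm (E y) \<le> (e * KR) * nm y" for y
  proof -
    have "nm (E y) = nm (B (R y) - A (R y))" unfolding E_def by (rule nm_commute)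
    also have "\<dots> \<le> e * nm (R y)" by (rule BA)
    also have "\<dots> \<le> e * (KR * nm y)" using KR(1) e(1) by (rule mult_left_mono)
    finally show ?thesis by simp
  qed
  have eK: "0 \<le> e * KR" using e KR by simp
  obtain W where W: "bop scal ip W" "\<forall>y. W y - E (W y) = y"
    using neumann[OF E Eb eK e(2)] by blast
  have BRW: "B (R (W y)) = y" for y
  proof -
    have "E (W y) = W y - B (R (W y))" by (simp add: E_def AR)
    then show ?thesis using W(2)[rule_format, of y] by simp
  qed
  have "bop scal ip (\<lambda>y. R (W y))" by (rule bop_comp[OF R W(1)])
  moreover have "B \<circ> (\<lambda>y. R (W y)) = id" by (simp add: fun_eq_iff BRW)
  ultimately show ?thesis unfolding right_invertible_def by blast
qed

end

context hs begin

lemma shift_bop: "bop scal ip T \<Longrightarrow> bop scal ip (shift_op scal T l)"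
  unfolding shift_op_def by (rule bop_sub[OF _ bop_scal_id])

lemma shift_app: "shift_op scal T l x = T x - scal l x"
  by (simp add: shift_op_def)

lemma shift0: "shift_op scal T 0 = T"
  by (simp add: shift_op_def fun_eq_iff)

lemma shift_dist: "nm (shift_op scal T l' x - shift_op scal T l x) \<le> cmod (l - l') * nm x"
proof -
  have "shift_op scal T l' x - shift_op scal T l x = scal (l - l') x"
    by (simp add: shift_op_def scal_diff_left)
  then show ?thesis by (simp add: nm_scal)
qed

lemma lr_inv:
  assumes "bop scal ip S" "\<And>x. S (A x) = x" "\<And>y. A (R y) = y"
  shows "op_invertible scal ip A"
proof -
  have "S y = R y" for y using assms(2)[of "R y"] assms(3)[of y] by simp
  then have "A (S y) = y" for y using assms(3) by simp
  then show ?thesis unfolding op_invertible_def using assms(1,2)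
    by (intro exI[of _ S]) (simp add: fun_eq_iff)
qed

lemma big_inv:
  assumes T: "bop scal ip T" and N: "\<And>x. nm (T x) \<le> nm x" and l: "cmod l > 1"
  shows "op_invertible scal ip (shift_op scal T l)"
proof -
  have l0: "l \<noteq> 0" using l by auto
  define E where "E x = scal (1 / l) (T x)" for x
  have E: "bop scal ip E" unfolding E_def by (rule bop_smult[OF T])
  have Eb: "nm (E x) \<le> (1 / cmod l) * nm x" for x
  proof -
    have "nm (E x) = (1 / cmod l) * nm (T x)" by (simp add: E_def nm_scal norm_divide)
    also have "\<dots> \<le> (1 / cmod l) * nm x" using N[of x] l by (simp add: divide_right_mono)
    finally show ?thesis .
  qed
  have K: "0 \<le> 1 / cmod l" "1 / cmod l < 1" using l by (simp_all add: divide_less_eq)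
  obtain W where W: "bop scal ip W" "\<forall>y. W y - E (W y) = y" "\<forall>x. W (x - E x) = x"
    using neumann[OF E Eb K] by blast
  have sh: "shift_op scal T l x = scal (- l) (x - E x)" for x
  proof -
    have "scal (- l) (E x) = - T x" using l0
      by (simp add: E_def scal_scal scal_minus_left)
    then show ?thesis by (simp add: shift_op_def scal_diff_right scal_minus_left)
  qed
  define V where "V y = W (scal (- 1 / l) y)" for y
  have V: "bop scal ip V" unfolding V_def by (rule bop_comp[OF W(1) bop_scal_id])
  have "shift_op scal T l (V y) = y" for y
  proof -
    have "shift_op scal T l (V y) = scal (- l) (scal (- 1 / l) y)"
      unfolding sh V_def using W(2) by simp
    also have "\<dots> = y" using l0 by (simp add: scal_scal)
    finally show ?thesis .
  qed
  moreover have "V (shift_op scal T l x) = x" for x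
  proof -
    have "scal (- 1 / l) (shift_op scal T l x) = x - E x"
      unfolding sh using l0 by (simp add: scal_scal)
    then show ?thesis unfolding V_def using W(3) by simp
  qed
  ultimately show ?thesis unfolding op_invertible_def using V
    by (intro exI[of _ V]) (simp add: fun_eq_iff)
qed

end

context hs begin

lemma part1:
  assumes bT: "bop scal ip T" and li: "left_invertible scal ip T"
    and z: "0 \<in> op_spectrum scal ip T"
    and H1: "right_spectrum scal ip (cauchy_dual scal ip T) \<subseteq> cball 0 1"
  shows "ball 0 1 \<subseteq> right_spectrum scal ip T - left_spectrum scal ip T"
proof -
  obtain S where S: "bop scal ip S" "S \<circ> T = id" using li unfolding left_invertible_def by blast
  have ST: "S (T x) = x" for x using S(2) by (simp add: fun_eq_iff)
  define Ta where "Ta = adj scal ip T"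
  have Ta: "bop scal ip Ta" "\<And>x y. ip (T x) y = ip x (Ta y)" using adj_prop[OF bT] by (simp_all add: Ta_def)
  define P where "P = Ta \<circ> T"
  have P: "bop scal ip P" unfolding P_def by (rule bop_comp'[OF Ta(1) bT])
  obtain M0 where M0: "bop scal ip M0" "\<forall>x. M0 (Ta (T x)) = x" "\<forall>y. Ta (T (M0 y)) = y"
    using gram_inv[OF bT S(1) ST] unfolding Ta_def[symmetric] by blast
  define M where "M = op_inv scal ip P"
  have "bop scal ip M \<and> M \<circ> P = id \<and> P \<circ> M = id"
    unfolding M_def op_inv_def
    by (rule someI[of _ M0]) (simp add: M0 P_def fun_eq_iff)
  then have M: "bop scal ip M" "\<And>x. M (Ta (T x)) = x" "\<And>y. Ta (T (M y)) = y"
    by (simp_all add: fun_eq_iff P_def)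
  have saP: "sa (\<lambda>x. Ta (T x))" unfolding sa_def
  proof (intro allI)
    fix x y
    have "ip x (Ta (T y)) = ip (T x) (T y)" by (simp add: Ta(2))
    moreover have "ip y (Ta (T x)) = ip (T y) (T x)" by (simp add: Ta(2))
    ultimately show "ip (Ta (T x)) y = ip x (Ta (T y))"
      using ip_sym[of "Ta (T x)" y] ip_sym[of "T x" "T y"] by simp
  qed
  have saM: "sa M" by (rule inv_sa[OF saP M(3)])
  define T' where "T' = cauchy_dual scal ip T"
  have T'eq: "T' x = T (M x)" for x unfolding T'_def cauchy_dual_def M_def P_def Ta_def by simp
  define L where "L x = M (Ta x)" for x
  have L: "bop scal ip L" unfolding L_def by (rule bop_comp[OF M(1) Ta(1)])
  have T'f: "T' = T \<circ> M" by (simp add: T'_def cauchy_dual_def M_def P_def Ta_def)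
  have T'b: "bop scal ip T'" unfolding T'f by (rule bop_comp'[OF bT M(1)])
  have adjT': "ip (T' y) x = ip y (L x)" for x y
  proof -
    have "ip (T' y) x = ip (M y) (Ta x)" by (simp add: T'eq Ta(2))
    also have "\<dots> = ip y (L x)" using saM unfolding sa_def L_def by simp
    finally show ?thesis .
  qed
  have LT: "L (T x) = x" for x by (simp add: L_def M(2))
  define sh where "sh l = shift_op scal T l" for l
  have shb: "bop scal ip (sh l)" for l unfolding sh_def by (rule shift_bop[OF bT])
  have LI: "\<exists>G. bop scal ip G \<and> (\<forall>x. G (sh l x) = x)" if l: "l \<in> ball 0 1" for l
  proof (cases "l = 0")
    case True then show ?thesis using S(1) ST unfolding sh_def True shift0 by blast
  next
    case False
    define mu where "mu = cnj (1 / l)"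
    have "cmod mu = 1 / cmod l" by (simp add: mu_def norm_divide)
    moreover have "cmod l < 1" "cmod l > 0" using l False by auto
    ultimately have "cmod mu > 1" by (simp add: divide_less_eq)
    then have "mu \<notin> right_spectrum scal ip T'" using H1 unfolding T'_def by auto
    then obtain R where R: "bop scal ip R" "shift_op scal T' mu \<circ> R = id"
      unfolding right_spectrum_def right_invertible_def by blast
    have RT: "T' (R y) = y + scal mu (R y)" for y
      using R(2) by (simp add: fun_eq_iff shift_op_def algebra_simps)
    define R' where "R' = adj scal ip R"
    have R': "bop scal ip R'" "\<And>x y. ip (R x) y = ip x (R' y)" using adj_prop[OF R(1)] by (simp_all add: R'_def)
    define G where "G y = R' (scal (- 1 / l) (L y))" for y
    have G: "bop scal ip G" unfolding G_def by (rule bop_comp[OF R'(1) bop_smult[OF L]])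
    have "G (sh l x) = x" for x
    proof (rule ip_unique_left)
      fix y
      define b where "b = scal (- 1 / l) (L (sh l x))"
      have e1: "ip (R y) (L x) = ip y x + mu * ip (R y) x"
        using adjT'[of "R y" x] by (simp add: RT ip_add_left ip_scal_left)
      have Lsh: "L (sh l x) = x - scal l (L x)"
        by (simp add: sh_def shift_op_def bop_diff[OF L] bop_scal[OF L] LT)
      have "ip (R y) b = cnj (- 1 / l) * (ip (R y) x - cnj l * ip (R y) (L x))"
        unfolding b_def Lsh by (simp add: ip_scal_right ip_diff_right)
      also have "\<dots> = ip y x"
        unfolding e1 mu_def using False by (simp add: field_simps)
      finally have "ip (R y) b = ip y x" .
      then have "ip y (R' b) = ip y x" by (simp add: R'(2))
      then have "ip (R' b) y = ip x y" using ip_sym[of "R' b" y] ip_sym[of x y] by simp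
      then show "ip (G (sh l x)) y = ip x y" unfolding G_def b_def .
    qed
    then show ?thesis using G by blast
  qed
  have notl: "l \<notin> left_spectrum scal ip T" if lb: "l \<in> ball 0 1" for l
  proof -
    obtain G where "bop scal ip G" "\<forall>x. G (sh l x) = x" using LI[OF lb] by blast
    then show ?thesis unfolding left_spectrum_def left_invertible_def sh_def
      by (auto simp: fun_eq_iff)
  qed
  define U where "U = {l. l \<in> ball 0 1 \<and> right_invertible scal ip (sh l)}"
  define V where "V = {l. l \<in> ball 0 1 \<and> \<not> right_invertible scal ip (sh l)}"
  have openU: "open U" unfolding open_contains_ball
  proof
    fix l assume "l \<in> U"
    then have l: "cmod l < 1" and ri: "right_invertible scal ip (sh l)" unfolding U_def by auto
    obtain R where R: "bop scal ip R" "sh l \<circ> R = id" using ri unfolding right_invertible_def by blast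
    obtain KR where KR: "\<And>y. nm (R y) \<le> KR * nm y" "KR > 0" using bop_bound[OF R(1)] by blast
    define r where "r = min (1 - cmod l) (1 / (2 * KR))"
    have r: "r > 0" using l KR by (simp add: r_def)
    have "ball l r \<subseteq> U"
    proof
      fix l' assume "l' \<in> ball l r"
      then have d: "cmod (l - l') < r" by (simp add: dist_norm)
      have "cmod l' \<le> cmod l + cmod (l - l')" by (metis norm_triangle_sub add.commute norm_minus_commute)
      then have l': "cmod l' < 1" using d r_def by linarith
      have e2: "cmod (l - l') * KR < 1"
      proof -
        have "cmod (l - l') * KR < r * KR" using d KR by simp
        also have "\<dots> \<le> (1 / (2 * KR)) * KR" by (rule mult_right_mono) (use KR(2) in \<open>simp_all add: r_def\<close>)
        also have "\<dots> < 1" using KR by simp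
        finally show ?thesis .
      qed
      have "right_invertible scal ip (sh l')"
        by (rule right_inv_stable[OF shb[of l] R(1) _ KR shb[of l'] _ _ e2])
           (use R(2) in \<open>simp_all add: fun_eq_iff sh_def shift_dist\<close>)
      then show "l' \<in> U" using l' unfolding U_def by simp
    qed
    then show "\<exists>e>0. ball l e \<subseteq> U" using r by blast
  qed
  have openV: "open V" unfolding open_contains_ball
  proof
    fix l assume "l \<in> V"
    then have l: "cmod l < 1" and nri: "\<not> right_invertible scal ip (sh l)" unfolding V_def by auto
    obtain G where G: "bop scal ip G" "\<forall>x. G (sh l x) = x" using LI[of l] l by auto
    obtain KG where KG: "\<And>y. nm (G y) \<le> KG * nm y" "KG > 0" using bop_bound[OF G(1)] by blast
    have "\<exists>z. \<forall>x. sh l x \<noteq> z"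
    proof (rule ccontr)
      assume "\<not> (\<exists>z. \<forall>x. sh l x \<noteq> z)"
      then have su: "\<exists>x. sh l x = y" for y by blast
      have "sh l (G y) = y" for y using su[of y] G(2) by auto
      then have "right_invertible scal ip (sh l)" unfolding right_invertible_def using G(1)
        by (intro exI[of _ G]) (simp add: fun_eq_iff)
      then show False using nri by simp
    qed
    then obtain z where z: "\<And>x. sh l x \<noteq> z" by blast
    define r where "r = min (1 - cmod l) (1 / (4 * KG))"
    have r: "r > 0" using l KG by (simp add: r_def)
    have "ball l r \<subseteq> V"
    proof
      fix l' assume "l' \<in> ball l r"
      then have d: "cmod (l - l') < r" by (simp add: dist_norm)
      have "cmod l' \<le> cmod l + cmod (l - l')" by (metis norm_triangle_sub add.commute norm_minus_commute)
      then have l': "cmod l' < 1" using d r_def by linarith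
      have e2: "cmod (l - l') * KG \<le> 1/4"
      proof -
        have "cmod (l - l') * KG \<le> r * KG" using d KG by simp
        also have "\<dots> \<le> (1 / (4 * KG)) * KG" by (rule mult_right_mono) (use KG(2) in \<open>simp_all add: r_def\<close>)
        also have "\<dots> = 1/4" using KG by simp
        finally show ?thesis .
      qed
      have "\<not> (\<exists>R. \<forall>y. sh l' (R y) = y)"
        by (rule not_surj_stable[where B="sh l'", OF shb[of l] G(1) _ KG z _ _ e2])
           (use G(2) in \<open>simp_all add: sh_def shift_dist\<close>)
      then have "\<not> right_invertible scal ip (sh l')" unfolding right_invertible_def
        by (auto simp: fun_eq_iff)
      then show "l' \<in> V" using l' unfolding V_def by simp
    qed
    then show "\<exists>e>0. ball l e \<subseteq> V" using r by blast
  qed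
  have "0 \<in> V"
  proof -
    have "\<not> right_invertible scal ip T"
    proof
      assume "right_invertible scal ip T"
      then obtain R where "T \<circ> R = id" unfolding right_invertible_def by blast
      then have "\<And>y. T (R y) = y" by (simp add: fun_eq_iff)
      then have "op_invertible scal ip T" by (rule lr_inv[OF S(1) ST])
      then show False using z unfolding op_spectrum_def by (simp add: shift0)
    qed
    then show ?thesis unfolding V_def sh_def by (simp add: shift0)
  qed
  have "U \<inter> ball 0 1 = {} \<or> V \<inter> ball 0 1 = {}"
    by (rule connectedD[OF connected_ball openU openV]) (auto simp: U_def V_def)
  moreover have "V \<inter> ball 0 1 \<noteq> {}" using \<open>0 \<in> V\<close> by auto
  ultimately have "U \<inter> ball 0 1 = {}" by blast
  then have "l \<in> right_spectrum scal ip T" if "l \<in> ball 0 1" for l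
    using that unfolding U_def right_spectrum_def sh_def by auto
  then show ?thesis using notl by blast
qed

end

context hs begin

lemma part2:
  assumes bT: "bop scal ip T" and li: "left_invertible scal ip T"
    and z: "0 \<in> op_spectrum scal ip T"
    and H1: "right_spectrum scal ip (cauchy_dual scal ip T) \<subseteq> cball 0 1"
    and N: "\<forall>x. nm (T x) \<le> nm x"
  shows "right_spectrum scal ip T = cball 0 1 \<and> op_spectrum scal ip T = cball 0 1"
proof -
  have B: "ball 0 1 \<subseteq> right_spectrum scal ip T" using part1[OF bT li z H1] by blast
  have rs: "right_spectrum scal ip T \<subseteq> op_spectrum scal ip T"
    unfolding right_spectrum_def op_spectrum_def op_invertible_def right_invertible_def by blast
  have sc: "op_spectrum scal ip T \<subseteq> cball 0 1"
  proof
    fix l assume "l \<in> op_spectrum scal ip T"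
    then have "\<not> op_invertible scal ip (shift_op scal T l)" unfolding op_spectrum_def by simp
    then have "\<not> cmod l > 1" using big_inv[OF bT] N by blast
    then show "l \<in> cball 0 1" by simp
  qed
  have cr: "cball 0 1 \<subseteq> right_spectrum scal ip T"
  proof
    fix l :: complex assume "l \<in> cball 0 1"
    then have l1: "cmod l \<le> 1" by simp
    show "l \<in> right_spectrum scal ip T"
    proof (cases "cmod l < 1")
      case True then show ?thesis using B by auto
    next
      case False
      then have l1': "cmod l = 1" using l1 by simp
      show ?thesis
      proof (rule ccontr)
        assume "l \<notin> right_spectrum scal ip T"
        then obtain R where R: "bop scal ip R" "shift_op scal T l \<circ> R = id"
          unfolding right_spectrum_def right_invertible_def by blast
        obtain KR where KR: "\<And>y. nm (R y) \<le> KR * nm y" "KR > 0" using bop_bound[OF R(1)] by blast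
        define d where "d = min (1/2) (1 / (2 * KR))"
        have d: "d > 0" "d \<le> 1/2" "d \<le> 1 / (2 * KR)" using KR by (simp_all add: d_def)
        define l' where "l' = complex_of_real (1 - d) * l"
        have dl: "cmod (l - l') = d" unfolding l'_def
        proof -
          have "l - complex_of_real (1 - d) * l = complex_of_real d * l" by (simp add: algebra_simps)
          then show "cmod (l - complex_of_real (1 - d) * l) = d" using l1' d by (simp add: norm_mult)
        qed
        have nd: "cmod (complex_of_real (1 - d)) = 1 - d" using d by (simp only: norm_of_real)
        have l'1: "cmod l' < 1" unfolding l'_def norm_mult nd l1' using d by simp
        have e2: "cmod (l - l') * KR < 1"
        proof -
          have "cmod (l - l') * KR \<le> (1 / (2 * KR)) * KR"
            unfolding dl by (rule mult_right_mono) (use KR(2) d in simp_all)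
          also have "\<dots> < 1" using KR by simp
          finally show ?thesis .
        qed
        have "right_invertible scal ip (shift_op scal T l')"
          by (rule right_inv_stable[OF shift_bop[OF bT, of l] R(1) _ KR shift_bop[OF bT, of l'] _ _ e2])
             (use R(2) in \<open>simp_all add: fun_eq_iff shift_dist\<close>)
        moreover have "l' \<in> right_spectrum scal ip T" using B l'1 by auto
        ultimately show False unfolding right_spectrum_def by simp
      qed
    qed
  qed
  show ?thesis using rs sc cr by blast
qed

end

theorem corollary4p5:
  fixes scal :: "complex \<Rightarrow> 'a::ab_group_add \<Rightarrow> 'a"
    and ip :: "'a \<Rightarrow> 'a \<Rightarrow> complex"
    and T :: "'a \<Rightarrow> 'a"
  assumes H: "complex_hilbert_space scal ip"
    and bT: "bop scal ip T"
    and li: "left_invertible scal ip T"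
    and z: "0 \<in> op_spectrum scal ip T"
  shows "(right_spectrum scal ip (cauchy_dual scal ip T) \<subseteq> cball 0 1 \<longrightarrow>
            ball 0 1 \<subseteq> right_spectrum scal ip T - left_spectrum scal ip T)
       \<and> ((\<forall>x. hnorm ip (T x) \<le> hnorm ip x) \<and>
            right_spectrum scal ip (cauchy_dual scal ip T) \<subseteq> cball 0 1 \<longrightarrow>
            right_spectrum scal ip T = cball 0 1 \<and> op_spectrum scal ip T = cball 0 1)"
proof -
  interpret hs scal ip by (rule hs.intro[OF H])
  show ?thesis using part1[OF bT li z] part2[OF bT li z] by blast
qed

end
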